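(* Let $h:(\mathbb{R}^n,0)\to(\mathbb{R}^n,0)$ be a bi-Lipschitz homeomorphism germ, and let $A\subset\mathbb{R}^n$ be a set-germ at $0$ with $0\in\overline{A}$. Then [$LD(h(A))=LD(h(LD(A)))$ and $h(LD(A))$ satisfies condition (SSP)] if and only if [$LD(h^{-1}(LD(h(A))))=LD(A)$ and $h^{-1}(LD(h(A)))$ satisfies condition (SSP)].
   Context: For a set-germ $A\subset\mathbb{R}^n$ at $0$ with $0\in\overline A$, $D(A)=\{a\in S^{n-1}:\exists\, x_i\in A\setminus\{0\},\ x_i\to0,\ x_i/\|x_i\|\to a\}$ and $LD(A)=\{ta:a\in D(A),t\ge0\}$. For sequences, $\|u_m\|\ll\|v_m\|,\|w_m\|$ means $\|u_m\|/\|v_m\|\to0$ and $\|u_m\|/\|w_m\|\to0$. $A$ satisfies condition (SSP) if for every sequence $a_m\in\mathbb{R}^n$ tending to $0$ with $\lim a_m/\|a_m\|\in D(A)$ there is a sequence $b_m\in A$ with $\|a_m-b_m\|\ll\|a_m\|,\|b_m\|$. A bi-Lipschitz homeomorphism germ is a homeomorphism germ $h$ with $h(0)=0$ and constants $0<K_1\le K_2$ with $K_1\|x-y\|\le\|h(x)-h(y)\|\le K_2\|x-y\|$ near $0$. *)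

theory Defs
  imports "HOL-Analysis.Analysis"
begin

definition dirs :: "'a::real_normed_vector set \<Rightarrow> 'a set" where
  "dirs A = {a \<in> sphere 0 1. \<exists>x. (\<forall>i. x i \<in> A - {0}) \<and> x \<longlonglongrightarrow> 0 \<and>
                 (\<lambda>i. x i /\<^sub>R norm (x i)) \<longlonglongrightarrow> a}"

definition LD :: "'a::real_normed_vector set \<Rightarrow> 'a set" where
  "LD A = {t *\<^sub>R a | t a. a \<in> dirs A \<and> t \<ge> 0}"

definition SSP :: "'a::real_normed_vector set \<Rightarrow> bool" where
  "SSP A \<longleftrightarrow> (\<forall>a :: nat \<Rightarrow> 'a. a \<longlonglongrightarrow> 0 \<and>
      (\<exists>u \<in> dirs A. (\<lambda>m. a m /\<^sub>R norm (a m)) \<longlonglongrightarrow> u) \<longrightarrow>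
      (\<exists>b. (\<forall>m. b m \<in> A) \<and>
           (\<lambda>m. norm (a m - b m) / norm (a m)) \<longlonglongrightarrow> 0 \<and>
           (\<lambda>m. norm (a m - b m) / norm (b m)) \<longlonglongrightarrow> 0))"

end

theory Submission imports Defs begin

lemma infdist_ex_less:
  assumes "A \<noteq> {}" "infdist x A < r" shows "\<exists>a\<in>A. dist x a < r"
proof -
  have "Inf (dist x ` A) < r" using assms by (simp add: infdist_notempty)
  from cInf_lessD[OF _ this] show ?thesis using assms(1) by blast
qed

lemma sgn_diff_le:
  fixes x y :: "'a::real_normed_vector"
  assumes "x \<noteq> 0" "y \<noteq> 0"
  shows "norm (x /\<^sub>R norm x - y /\<^sub>R norm y) \<le> 2 * norm (x - y) / norm y"
proof -
  have ny: "norm y > 0" using assms by simp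
  have nx: "norm x > 0" using assms by simp
  have eq: "x /\<^sub>R norm x - y /\<^sub>R norm y = (x - y) /\<^sub>R norm y + (1 / norm x - 1 / norm y) *\<^sub>R x"
    by (simp add: algebra_simps divide_inverse)
  have "norm ((1 / norm x - 1 / norm y) *\<^sub>R x) = \<bar>1 / norm x - 1 / norm y\<bar> * norm x" by simp
  also have "\<dots> = \<bar>(1 / norm x - 1 / norm y) * norm x\<bar>" using nx by (simp add: abs_mult)
  also have "(1 / norm x - 1 / norm y) * norm x = (norm y - norm x) / norm y"
    using nx ny by (simp add: left_diff_distrib diff_divide_distrib)
  also have "\<bar>(norm y - norm x) / norm y\<bar> = \<bar>norm y - norm x\<bar> / norm y"
    using ny by simp
  also have "\<dots> \<le> norm (x - y) / norm y"
  proof -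
    have "\<bar>norm y - norm x\<bar> \<le> norm (x - y)" by (metis norm_minus_commute norm_triangle_ineq3)
    then show ?thesis using ny by (simp add: divide_right_mono)
  qed
  finally have 2: "norm ((1 / norm x - 1 / norm y) *\<^sub>R x) \<le> norm (x - y) / norm y" .
  have "norm (x /\<^sub>R norm x - y /\<^sub>R norm y) \<le> norm ((x - y) /\<^sub>R norm y) + norm ((1 / norm x - 1 / norm y) *\<^sub>R x)"
    unfolding eq by (rule norm_triangle_ineq)
  also have "norm ((x - y) /\<^sub>R norm y) = norm (x - y) / norm y" by (simp add: divide_inverse_commute)
  finally show ?thesis using 2 by simp
qed

lemma dirs_iff:
  fixes X :: "'a::real_normed_vector set"
  shows "u \<in> dirs X \<longleftrightarrow> norm u = 1 \<and> (\<forall>e>0. \<forall>d>0. \<exists>x\<in>X. x \<noteq> 0 \<and> norm x < d \<and> norm (x /\<^sub>R norm x - u) < e)"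
proof
  assume "u \<in> dirs X"
  then obtain x where x: "\<forall>i. x i \<in> X - {0}" "x \<longlonglongrightarrow> 0" "(\<lambda>i. x i /\<^sub>R norm (x i)) \<longlonglongrightarrow> u"
    and nu: "norm u = 1" by (auto simp: dirs_def)
  show "norm u = 1 \<and> (\<forall>e>0. \<forall>d>0. \<exists>x\<in>X. x \<noteq> 0 \<and> norm x < d \<and> norm (x /\<^sub>R norm x - u) < e)"
  proof (intro conjI allI impI)
    show "norm u = 1" by (rule nu)
    fix e d :: real assume ed: "e>0" "d>0"
    have "eventually (\<lambda>i. norm (x i) < d) sequentially" using x(2) ed by (simp add: tendsto_iff)
    moreover have "eventually (\<lambda>i. norm (x i /\<^sub>R norm (x i) - u) < e) sequentially"
      using x(3) ed by (simp add: tendsto_iff dist_norm)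
    ultimately have "eventually (\<lambda>i. norm (x i) < d \<and> norm (x i /\<^sub>R norm (x i) - u) < e) sequentially"
      by (rule eventually_conj)
    then obtain N where "\<forall>n\<ge>N. norm (x n) < d \<and> norm (x n /\<^sub>R norm (x n) - u) < e"
      by (auto simp: eventually_sequentially)
    then show "\<exists>x\<in>X. x \<noteq> 0 \<and> norm x < d \<and> norm (x /\<^sub>R norm x - u) < e"
      using x(1) by blast
  qed
next
  assume H: "norm u = 1 \<and> (\<forall>e>0. \<forall>d>0. \<exists>x\<in>X. x \<noteq> 0 \<and> norm x < d \<and> norm (x /\<^sub>R norm x - u) < e)"
  have "\<forall>n::nat. \<exists>y. y \<in> X \<and> y \<noteq> 0 \<and> norm y < 1 / real (Suc n) \<and> norm (y /\<^sub>R norm y - u) < 1 / real (Suc n)"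
  proof
    fix n :: nat
    have p: "1 / real (Suc n) > 0" by simp
    show "\<exists>y. y \<in> X \<and> y \<noteq> 0 \<and> norm y < 1 / real (Suc n) \<and> norm (y /\<^sub>R norm y - u) < 1 / real (Suc n)"
      using H p by blast
  qed
  then obtain f where f: "\<forall>n. f n \<in> X \<and> f n \<noteq> 0 \<and> norm (f n) < 1 / real (Suc n) \<and>
      norm (f n /\<^sub>R norm (f n) - u) < 1 / real (Suc n)" by metis
  have "f \<longlonglongrightarrow> 0" by (rule LIMSEQ_norm_0) (use f in auto)
  moreover have "(\<lambda>n. f n /\<^sub>R norm (f n)) \<longlonglongrightarrow> u"
    by (rule LIM_zero_cancel, rule LIMSEQ_norm_0) (use f in auto)
  ultimately show "u \<in> dirs X" using f H unfolding dirs_def by auto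
qed

definition apx :: "'a::real_normed_vector set \<Rightarrow> 'a set \<Rightarrow> bool" where
  "apx Y X \<longleftrightarrow> (\<forall>e>0. \<exists>d>0. \<forall>y\<in>Y. 0 < norm y \<and> norm y < d \<longrightarrow> (\<exists>x\<in>X. norm (x - y) \<le> e * norm y))"

lemma apx_refl: "apx X X"
  unfolding apx_def
proof (intro allI impI exI[of _ 1] conjI ballI)
  fix e :: real and y assume "e > 0" "y \<in> X"
  then show "\<exists>x\<in>X. norm (x - y) \<le> e * norm y" by (intro bexI[of _ y]) auto
qed simp

lemma apx_mono: "apx Y X \<Longrightarrow> Y' \<subseteq> Y \<Longrightarrow> X \<subseteq> X' \<Longrightarrow> apx Y' X'"
proof -
  assume a: "apx Y X" "Y' \<subseteq> Y" "X \<subseteq> X'"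
  show "apx Y' X'" unfolding apx_def
  proof (intro allI impI)
    fix e :: real assume "e > 0"
    then obtain d where "d > 0" "\<forall>y\<in>Y. 0 < norm y \<and> norm y < d \<longrightarrow> (\<exists>x\<in>X. norm (x - y) \<le> e * norm y)"
      using a(1) unfolding apx_def by blast
    then show "\<exists>d>0. \<forall>y\<in>Y'. 0 < norm y \<and> norm y < d \<longrightarrow> (\<exists>x\<in>X'. norm (x - y) \<le> e * norm y)"
      using a(2,3) by blast
  qed
qed

lemma apx_trans:
  assumes "apx Y X" "apx X Z" shows "apx Y Z"
  unfolding apx_def
proof (intro allI impI)
  fix e :: real assume e: "e > 0"
  have e1: "min (1/2) (e/2) > 0" "e/3 > 0" using e by auto
  obtain d1 where d1: "d1>0" "\<forall>y\<in>Y. 0<norm y \<and> norm y < d1 \<longrightarrow> (\<exists>x\<in>X. norm (x - y) \<le> min (1/2) (e/2) * norm y)"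
    using assms(1) e1(1) unfolding apx_def by blast
  obtain d2 where d2: "d2>0" "\<forall>x\<in>X. 0<norm x \<and> norm x < d2 \<longrightarrow> (\<exists>z\<in>Z. norm (z - x) \<le> (e/3) * norm x)"
    using assms(2) e1(2) unfolding apx_def by blast
  show "\<exists>d>0. \<forall>y\<in>Y. 0 < norm y \<and> norm y < d \<longrightarrow> (\<exists>z\<in>Z. norm (z - y) \<le> e * norm y)"
  proof (intro exI[of _ "min d1 (d2/2)"] conjI ballI impI)
    show "min d1 (d2/2) > 0" using d1 d2 by simp
    fix y assume y: "y \<in> Y" "0 < norm y \<and> norm y < min d1 (d2/2)"
    then obtain x where x: "x \<in> X" "norm (x - y) \<le> min (1/2) (e/2) * norm y" using d1 by auto
    have t1: "norm y - norm x \<le> norm (x - y)" by (metis norm_minus_commute norm_triangle_ineq2)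
    have t2: "norm x - norm y \<le> norm (x - y)" by (metis norm_triangle_ineq2)
    have "min (1/2) (e/2) * norm y \<le> 1/2 * norm y" by (rule mult_right_mono) auto
    then have h1: "norm (x - y) \<le> norm y / 2" using x(2) by simp
    have "min (1/2) (e/2) * norm y \<le> e/2 * norm y" by (rule mult_right_mono) auto
    then have h2: "norm (x - y) \<le> e/2 * norm y" using x(2) by simp
    have nx: "0 < norm x" "norm x < d2" "norm x \<le> 3/2 * norm y" using t1 t2 h1 y by auto
    then obtain z where z: "z \<in> Z" "norm (z - x) \<le> e/3 * norm x" using d2 x by auto
    have "z - y = (z - x) + (x - y)" by simp
    then have "norm (z - y) \<le> norm (z - x) + norm (x - y)" by (metis norm_triangle_ineq)
    also have "\<dots> \<le> e/3 * (3/2 * norm y) + e/2 * norm y"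
    proof -
      have "e/3 * norm x \<le> e/3 * (3/2 * norm y)" using nx(3) e by (intro mult_left_mono) auto
      then show ?thesis using z(2) h2 by linarith
    qed
    also have "\<dots> = e * norm y" by simp
    finally show "\<exists>z\<in>Z. norm (z - y) \<le> e * norm y" using z by blast
  qed
qed

lemma apx_restrict_left:
  assumes "apx (Y \<inter> W) X" "open W" "0 \<in> W" shows "apx Y X"
proof -
  obtain r where r: "r>0" "ball 0 r \<subseteq> W" using assms(2,3) openE by blast
  show ?thesis unfolding apx_def
  proof (intro allI impI)
    fix e::real assume "e>0"
    then obtain d where d: "d>0" "\<forall>y\<in>Y\<inter>W. 0<norm y \<and> norm y<d \<longrightarrow> (\<exists>x\<in>X. norm(x-y) \<le> e*norm y)"
      using assms(1) unfolding apx_def by blast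
    show "\<exists>d>0. \<forall>y\<in>Y. 0<norm y \<and> norm y<d \<longrightarrow> (\<exists>x\<in>X. norm(x-y) \<le> e*norm y)"
    proof (intro exI[of _ "min d r"] conjI ballI impI)
      show "min d r > 0" using d r by simp
      fix y assume y: "y\<in>Y" "0<norm y \<and> norm y < min d r"
      then have "y \<in> W" using r by auto
      then show "\<exists>x\<in>X. norm(x-y) \<le> e*norm y" using d y by auto
    qed
  qed
qed

lemma apx_restrict_right:
  assumes "apx Y X" "open W" "0 \<in> W" shows "apx Y (X \<inter> W)"
proof -
  obtain r where r: "r>0" "ball 0 r \<subseteq> W" using assms(2,3) openE by blast
  show ?thesis unfolding apx_def
  proof (intro allI impI)
    fix e::real assume e: "e>0"
    then have "min e 1 > 0" by simp
    then obtain d where d: "d>0" "\<forall>y\<in>Y. 0<norm y \<and> norm y<d \<longrightarrow> (\<exists>x\<in>X. norm(x-y) \<le> min e 1*norm y)"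
      using assms(1) unfolding apx_def by blast
    show "\<exists>d>0. \<forall>y\<in>Y. 0<norm y \<and> norm y<d \<longrightarrow> (\<exists>x\<in>X\<inter>W. norm(x-y) \<le> e*norm y)"
    proof (intro exI[of _ "min d (r/2)"] conjI ballI impI)
      show "min d (r/2) > 0" using d r by simp
      fix y assume y: "y\<in>Y" "0<norm y \<and> norm y < min d (r/2)"
      then obtain x where x: "x \<in> X" "norm(x-y) \<le> min e 1*norm y" using d by auto
      have m1: "min e 1 * norm y \<le> 1 * norm y" by (rule mult_right_mono) auto
      have m2: "min e 1 * norm y \<le> e * norm y" by (rule mult_right_mono) auto
      have m3: "norm x \<le> norm y + norm (x - y)" by (metis add.commute diff_add_cancel norm_triangle_ineq)
      have "norm y < r/2" using y by simp
      then have "norm x < r" "norm(x-y) \<le> e*norm y" using x(2) m1 m2 m3 by linarith+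
      then have "x \<in> W" using r by auto
      then show "\<exists>x\<in>X\<inter>W. norm(x-y) \<le> e*norm y" using x \<open>norm(x-y) \<le> e*norm y\<close> by blast
    qed
  qed
qed

lemma apx_image:
  fixes f :: "'a::real_normed_vector \<Rightarrow> 'b::real_normed_vector"
  assumes "apx Y X" "Y \<subseteq> W" "X \<subseteq> W" "0 \<in> W" "f 0 = 0" "0 < K1" "K1 \<le> K2"
    "\<forall>x\<in>W. \<forall>y\<in>W. K1 * norm (x - y) \<le> norm (f x - f y) \<and> norm (f x - f y) \<le> K2 * norm (x - y)"
  shows "apx (f ` Y) (f ` X)"
  unfolding apx_def
proof (intro allI impI)
  fix e :: real assume e: "e > 0"
  have K2: "K2 > 0" using assms(6,7) by simp
  have "e*K1/K2 > 0" using e K2 assms(6) by simp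
  then obtain d where d: "d>0" "\<forall>y\<in>Y. 0<norm y \<and> norm y<d \<longrightarrow> (\<exists>x\<in>X. norm(x-y) \<le> (e*K1/K2)*norm y)"
    using assms(1) unfolding apx_def by blast
  show "\<exists>d>0. \<forall>y\<in>f`Y. 0<norm y \<and> norm y<d \<longrightarrow> (\<exists>x\<in>f`X. norm(x-y) \<le> e*norm y)"
  proof (intro exI[of _ "K1*d"] conjI ballI impI)
    show "K1*d > 0" using d assms(6) by simp
    fix y' assume y': "y' \<in> f`Y" "0 < norm y' \<and> norm y' < K1*d"
    then obtain y where y: "y \<in> Y" "y' = f y" by auto
    have yW: "y \<in> W" using y assms(2) by auto
    have L: "K1 * norm y \<le> norm (f y)" "norm (f y) \<le> K2 * norm y"
      using assms(8) yW assms(4) assms(5) by (metis diff_zero)+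
    have "norm y > 0" using L(2) y' y K2 by (metis mult_zero_right norm_eq_zero norm_zero order_le_less zero_less_norm_iff not_less)
    moreover have "norm y < d" using L(1) y' y assms(6) by (smt (verit) mult_less_cancel_left_pos)
    ultimately obtain x where x: "x \<in> X" "norm(x-y) \<le> (e*K1/K2)*norm y" using d y by auto
    have xW: "x \<in> W" using x assms(3) by auto
    have "norm (f x - f y) \<le> K2 * norm (x - y)" using assms(8) xW yW by blast
    also have "\<dots> \<le> K2 * ((e*K1/K2)*norm y)" using x(2) K2 by (intro mult_left_mono) auto
    also have "\<dots> = e * (K1 * norm y)" using K2 by simp
    also have "\<dots> \<le> e * norm (f y)" using L(1) e by (intro mult_left_mono) auto
    finally show "\<exists>x\<in>f`X. norm(x-y') \<le> e*norm y'" using x y by blast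
  qed
qed

lemma apx_dirs:
  assumes "apx Y X" shows "dirs Y \<subseteq> dirs X"
proof
  fix u assume "u \<in> dirs Y"
  then have nu: "norm u = 1" and H: "\<forall>e>0. \<forall>d>0. \<exists>y\<in>Y. y\<noteq>0 \<and> norm y < d \<and> norm (y /\<^sub>R norm y - u) < e"
    by (auto simp: dirs_iff)
  show "u \<in> dirs X" unfolding dirs_iff
  proof (intro conjI allI impI nu)
    fix e d :: real assume ed: "e>0" "d>0"
    have e': "min (1/2) (e/4) > 0" using ed by simp
    obtain d1 where d1: "d1>0" "\<forall>y\<in>Y. 0<norm y \<and> norm y<d1 \<longrightarrow> (\<exists>x\<in>X. norm(x-y) \<le> min (1/2) (e/4) * norm y)"
      using assms e' unfolding apx_def by blast
    have "min d1 (d/2) > 0" "e/2 > 0" using d1 ed by auto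
    then obtain y where y: "y\<in>Y" "y\<noteq>0" "norm y < min d1 (d/2)" "norm (y /\<^sub>R norm y - u) < e/2"
      using H by blast
    then obtain x where x: "x\<in>X" "norm(x-y) \<le> min (1/2) (e/4) * norm y" using d1 by auto
    have "min (1/2) (e/4) * norm y \<le> 1/2 * norm y" by (rule mult_right_mono) auto
    then have h1: "norm (x - y) \<le> norm y / 2" using x(2) by simp
    have "min (1/2) (e/4) * norm y \<le> e/4 * norm y" by (rule mult_right_mono) auto
    then have h2: "norm (x - y) \<le> e/4 * norm y" using x(2) by simp
    have t1: "norm y - norm x \<le> norm (x - y)" by (metis norm_minus_commute norm_triangle_ineq2)
    have t2: "norm x - norm y \<le> norm (x - y)" by (metis norm_triangle_ineq2)
    have nx: "x \<noteq> 0" "norm x < d" using t1 t2 h1 y by auto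
    have "norm (x /\<^sub>R norm x - y /\<^sub>R norm y) \<le> 2 * norm (x - y) / norm y"
      by (rule sgn_diff_le) (use nx y in auto)
    also have "\<dots> \<le> 2 * (e/4 * norm y) / norm y" using h2 by (intro divide_right_mono) auto
    also have "\<dots> = e/2" using y by simp
    finally have s: "norm (x /\<^sub>R norm x - y /\<^sub>R norm y) \<le> e/2" .
    have "x /\<^sub>R norm x - u = (x /\<^sub>R norm x - y /\<^sub>R norm y) + (y /\<^sub>R norm y - u)" by simp
    then have "norm (x /\<^sub>R norm x - u) \<le> norm (x /\<^sub>R norm x - y /\<^sub>R norm y) + norm (y /\<^sub>R norm y - u)"
      by (metis norm_triangle_ineq)
    then have "norm (x /\<^sub>R norm x - u) < e" using s y(4) by linarith
    then show "\<exists>x\<in>X. x \<noteq> 0 \<and> norm x < d \<and> norm (x /\<^sub>R norm x - u) < e" using x nx by blast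
  qed
qed

lemma tendsto0I:
  fixes f :: "nat \<Rightarrow> real"
  assumes "\<And>e. e>0 \<Longrightarrow> eventually (\<lambda>n. 0 \<le> f n \<and> f n \<le> e) sequentially"
  shows "f \<longlonglongrightarrow> 0"
  unfolding tendsto_iff dist_real_def
proof (intro allI impI)
  fix e::real assume e: "e>0"
  then have "eventually (\<lambda>n. 0 \<le> f n \<and> f n \<le> e/2) sequentially" using assms[of "e/2"] by simp
  then show "eventually (\<lambda>n. \<bar>f n - 0\<bar> < e) sequentially"
    by (rule eventually_mono) (use e in auto)
qed

lemma LD_dir:
  assumes "y \<in> LD X" "y \<noteq> 0" shows "y /\<^sub>R norm y \<in> dirs X"
proof -
  obtain t a where ta: "y = t *\<^sub>R a" "a \<in> dirs X" "t \<ge> 0" using assms(1) by (auto simp: LD_def)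
  have "norm a = 1" using ta(2) by (simp add: dirs_def)
  moreover have "t \<noteq> 0" using ta assms(2) by auto
  ultimately have "y /\<^sub>R norm y = a" using ta by simp
  then show ?thesis using ta by simp
qed

lemma dirs_LD: "dirs (LD X) = dirs X"
proof
  show "dirs (LD X) \<subseteq> dirs X"
  proof
    fix u assume "u \<in> dirs (LD X)"
    then have nu: "norm u = 1" and H: "\<forall>e>0. \<forall>d>0. \<exists>y\<in>LD X. y\<noteq>0 \<and> norm y < d \<and> norm (y /\<^sub>R norm y - u) < e"
      by (auto simp: dirs_iff)
    show "u \<in> dirs X" unfolding dirs_iff
    proof (intro conjI allI impI nu)
      fix e d :: real assume ed: "e>0" "d>0"
      then have "e/2 > 0" by simp
      then obtain y where y: "y \<in> LD X" "y \<noteq> 0" "norm y < d" "norm (y /\<^sub>R norm y - u) < e/2"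
        using H ed by blast
      have a: "y /\<^sub>R norm y \<in> dirs X" using LD_dir y by blast
      then obtain x where x: "x \<in> X" "x \<noteq> 0" "norm x < d" "norm (x /\<^sub>R norm x - y /\<^sub>R norm y) < e/2"
        using ed \<open>e/2>0\<close> unfolding dirs_iff by blast
      have "x /\<^sub>R norm x - u = (x /\<^sub>R norm x - y /\<^sub>R norm y) + (y /\<^sub>R norm y - u)" by simp
      then have "norm (x /\<^sub>R norm x - u) \<le> norm (x /\<^sub>R norm x - y /\<^sub>R norm y) + norm (y /\<^sub>R norm y - u)"
        by (metis norm_triangle_ineq)
      then have "norm (x /\<^sub>R norm x - u) < e" using x(4) y(4) by linarith
      then show "\<exists>x\<in>X. x \<noteq> 0 \<and> norm x < d \<and> norm (x /\<^sub>R norm x - u) < e" using x by blast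
    qed
  qed
  show "dirs X \<subseteq> dirs (LD X)"
  proof
    fix u assume u: "u \<in> dirs X"
    then have nu: "norm u = 1" by (simp add: dirs_def)
    show "u \<in> dirs (LD X)" unfolding dirs_iff
    proof (intro conjI allI impI nu)
      fix e d :: real assume ed: "e>0" "d>0"
      have "(d/2) *\<^sub>R u \<in> LD X" using u ed unfolding LD_def by force
      moreover have "norm ((d/2) *\<^sub>R u) = d/2" using nu ed by simp
      moreover have "((d/2) *\<^sub>R u) /\<^sub>R (d/2) = u" using ed by simp
      ultimately show "\<exists>x\<in>LD X. x \<noteq> 0 \<and> norm x < d \<and> norm (x /\<^sub>R norm x - u) < e"
        using ed nu by (intro bexI[of _ "(d/2) *\<^sub>R u"]) auto
    qed
  qed
qed

lemma LD_LD: "LD (LD X) = LD X"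
proof -
  have "LD (LD X) = {t *\<^sub>R a | t a. a \<in> dirs (LD X) \<and> t \<ge> 0}" by (rule LD_def)
  also have "\<dots> = LD X" by (subst dirs_LD) (simp add: LD_def)
  finally show ?thesis .
qed

lemma apx_LD:
  fixes X :: "'a::euclidean_space set"
  shows "apx X (LD X)"
proof (rule ccontr)
  assume "\<not> apx X (LD X)"
  then obtain e where e: "e>0" and H: "\<forall>d>0. \<exists>y\<in>X. 0<norm y \<and> norm y<d \<and> (\<forall>x\<in>LD X. norm(x-y) > e*norm y)"
    unfolding apx_def by (auto simp: not_le)
  have "\<forall>n::nat. \<exists>y. y\<in>X \<and> 0<norm y \<and> norm y < 1/real(Suc n) \<and> (\<forall>x\<in>LD X. norm(x-y) > e*norm y)"
  proof
    fix n :: nat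
    have p: "1 / real (Suc n) > 0" by simp
    show "\<exists>y. y\<in>X \<and> 0<norm y \<and> norm y < 1/real(Suc n) \<and> (\<forall>x\<in>LD X. norm(x-y) > e*norm y)"
      using H p by blast
  qed
  then obtain f where f: "\<forall>n. f n\<in>X \<and> 0<norm (f n) \<and> norm (f n) < 1/real(Suc n) \<and> (\<forall>x\<in>LD X. norm(x - f n) > e*norm (f n))"
    by metis
  define g where "g n = f n /\<^sub>R norm (f n)" for n
  have g: "\<forall>n. g n \<in> sphere 0 1" using f by (simp add: g_def)
  obtain l r where lr: "l \<in> sphere 0 1" "strict_mono r" "(g \<circ> r) \<longlonglongrightarrow> l"
    using seq_compactE[OF compact_imp_seq_compact[OF compact_sphere] g] by blast
  have f0: "f \<longlonglongrightarrow> 0" by (rule LIMSEQ_norm_0) (use f in auto)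
  have "l \<in> dirs X" unfolding dirs_def
  proof (intro CollectI conjI exI[of _ "f \<circ> r"])
    show "l \<in> sphere 0 1" by (rule lr(1))
    show "\<forall>i. (f \<circ> r) i \<in> X - {0}" using f by auto
    show "(f \<circ> r) \<longlonglongrightarrow> 0" using LIMSEQ_subseq_LIMSEQ[OF f0 lr(2)] .
    show "(\<lambda>i. (f \<circ> r) i /\<^sub>R norm ((f \<circ> r) i)) \<longlonglongrightarrow> l" using lr(3) by (simp add: g_def comp_def)
  qed
  have "eventually (\<lambda>n. norm ((g \<circ> r) n - l) < e) sequentially"
    using lr(3) e by (simp add: tendsto_iff dist_norm)
  then obtain n where n: "norm (g (r n) - l) < e" by (auto simp: eventually_sequentially)
  let ?y = "f (r n)"
  have z: "norm ?y *\<^sub>R l \<in> LD X" using \<open>l \<in> dirs X\<close> unfolding LD_def by force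
  have yeq: "?y = norm ?y *\<^sub>R g (r n)" using f by (simp add: g_def)
  have "norm ?y *\<^sub>R l - ?y = norm ?y *\<^sub>R (l - g (r n))" by (subst yeq) (simp add: algebra_simps)
  then have "norm (norm ?y *\<^sub>R l - ?y) = norm ?y * norm (g (r n) - l)" by (simp add: norm_minus_commute)
  also have "\<dots> \<le> norm ?y * e" using n by (intro mult_left_mono) auto
  finally have "norm (norm ?y *\<^sub>R l - ?y) \<le> e * norm ?y" by (metis mult.commute)
  moreover have "norm (norm ?y *\<^sub>R l - ?y) > e * norm ?y" using f z by blast
  ultimately show False by simp
qed

lemma SSP_imp_apx:
  fixes X :: "'a::euclidean_space set"
  assumes S: "SSP X" shows "apx (LD X) X"
proof (rule ccontr)
  assume "\<not> apx (LD X) X"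
  then obtain e where e: "e>0" and H: "\<forall>d>0. \<exists>y\<in>LD X. 0<norm y \<and> norm y<d \<and> (\<forall>x\<in>X. norm(x-y) > e*norm y)"
    unfolding apx_def by (auto simp: not_le)
  have "\<forall>n::nat. \<exists>y. y\<in>LD X \<and> 0<norm y \<and> norm y < 1/real(Suc n) \<and> (\<forall>x\<in>X. norm(x-y) > e*norm y)"
  proof
    fix n :: nat
    have p: "1 / real (Suc n) > 0" by simp
    show "\<exists>y. y\<in>LD X \<and> 0<norm y \<and> norm y < 1/real(Suc n) \<and> (\<forall>x\<in>X. norm(x-y) > e*norm y)"
      using H p by blast
  qed
  then obtain f where f: "\<forall>n. f n\<in>LD X \<and> 0<norm (f n) \<and> norm (f n) < 1/real(Suc n) \<and> (\<forall>x\<in>X. norm(x - f n) > e*norm (f n))"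
    by metis
  define g where "g n = f n /\<^sub>R norm (f n)" for n
  have gd: "\<forall>n. g n \<in> dirs X" using f LD_dir unfolding g_def by auto
  have g: "\<forall>n. g n \<in> sphere 0 1" using f by (simp add: g_def)
  obtain l r where lr: "l \<in> sphere 0 1" "strict_mono r" "(g \<circ> r) \<longlonglongrightarrow> l"
    using seq_compactE[OF compact_imp_seq_compact[OF compact_sphere] g] by blast
  have f0: "f \<longlonglongrightarrow> 0" by (rule LIMSEQ_norm_0) (use f in auto)
  have ldir: "l \<in> dirs X" unfolding dirs_iff
  proof (intro conjI allI impI)
    show "norm l = 1" using lr(1) by simp
    fix ee d :: real assume ed: "ee > 0" "d > 0"
    have "ee/2 > 0" using ed by simp
    then have "eventually (\<lambda>n. norm ((g \<circ> r) n - l) < ee/2) sequentially"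
      using lr(3)[unfolded tendsto_iff dist_norm] by blast
    then obtain n where n: "norm (g (r n) - l) < ee/2" by (auto simp: eventually_sequentially)
    have "ee/2 > 0" using ed by simp
    then obtain x where x: "x \<in> X" "x \<noteq> 0" "norm x < d" "norm (x /\<^sub>R norm x - g (r n)) < ee/2"
      using gd ed unfolding dirs_iff by blast
    have "x /\<^sub>R norm x - l = (x /\<^sub>R norm x - g (r n)) + (g (r n) - l)" by simp
    then have "norm (x /\<^sub>R norm x - l) \<le> norm (x /\<^sub>R norm x - g (r n)) + norm (g (r n) - l)"
      by (metis norm_triangle_ineq)
    then have "norm (x /\<^sub>R norm x - l) < ee" using x(4) n by linarith
    then show "\<exists>x\<in>X. x \<noteq> 0 \<and> norm x < d \<and> norm (x /\<^sub>R norm x - l) < ee" using x by blast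
  qed
  have a0: "(f \<circ> r) \<longlonglongrightarrow> 0" using LIMSEQ_subseq_LIMSEQ[OF f0 lr(2)] .
  have ad: "(\<lambda>m. (f \<circ> r) m /\<^sub>R norm ((f \<circ> r) m)) \<longlonglongrightarrow> l" using lr(3) by (simp add: g_def comp_def)
  obtain b where b: "\<forall>m. b m \<in> X" "(\<lambda>m. norm ((f \<circ> r) m - b m) / norm ((f \<circ> r) m)) \<longlonglongrightarrow> 0"
    using S a0 ad ldir unfolding SSP_def by blast
  have "eventually (\<lambda>m. norm ((f \<circ> r) m - b m) / norm ((f \<circ> r) m) < e) sequentially"
    using b(2) e by (simp add: tendsto_iff dist_norm)
  then obtain m where m: "norm (f (r m) - b m) / norm (f (r m)) < e" by (auto simp: eventually_sequentially)
  have pos: "norm (f (r m)) > 0" using f by auto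
  have "norm (f (r m) - b m) < e * norm (f (r m))" using m pos by (simp add: divide_less_eq)
  moreover have "norm (b m - f (r m)) > e * norm (f (r m))" using f b(1) by blast
  ultimately show False by (simp add: norm_minus_commute)
qed

lemma apx_imp_SSP:
  assumes A: "apx (LD X) X" shows "SSP X"
  unfolding SSP_def
proof (intro allI impI)
  fix a :: "nat \<Rightarrow> 'a" assume "a \<longlonglongrightarrow> 0 \<and> (\<exists>u\<in>dirs X. (\<lambda>m. a m /\<^sub>R norm (a m)) \<longlonglongrightarrow> u)"
  then obtain u where a0: "a \<longlonglongrightarrow> 0" and u: "u \<in> dirs X" and ad: "(\<lambda>m. a m /\<^sub>R norm (a m)) \<longlonglongrightarrow> u" by blast
  have nu: "norm u = 1" using u by (simp add: dirs_def)
  have Xne: "X \<noteq> {}" using u unfolding dirs_def by auto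
  define c where "c m = norm (a m) *\<^sub>R u" for m
  define eta where "eta m = norm (a m) / real (Suc m) + (if a m = 0 then 1 else 0)" for m
  have etapos: "eta m > 0" for m by (cases "a m = 0") (auto simp: eta_def)
  define b where "b m = (SOME x. x \<in> X \<and> dist (c m) x < infdist (c m) X + eta m)" for m
  have b: "b m \<in> X \<and> dist (c m) (b m) < infdist (c m) X + eta m" for m
  proof -
    have "infdist (c m) X < infdist (c m) X + eta m" using etapos[of m] by simp
    then have "\<exists>x. x \<in> X \<and> dist (c m) x < infdist (c m) X + eta m" using infdist_ex_less[OF Xne] by blast
    then show ?thesis unfolding b_def by (rule someI_ex)
  qed
  have key: "eventually (\<lambda>m. a m \<noteq> 0 \<and> norm (a m - b m) \<le> ee * norm (a m)) sequentially" if ee: "ee > 0" for ee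
  proof -
    have "ee/3 > 0" using ee by simp
    then obtain d where d: "d>0" "\<forall>y\<in>LD X. 0<norm y \<and> norm y<d \<longrightarrow> (\<exists>x\<in>X. norm(x-y) \<le> ee/3*norm y)"
      using A unfolding apx_def by blast
    have ev1: "eventually (\<lambda>m. norm (a m) < d) sequentially" using a0 d(1) by (simp add: tendsto_iff)
    have "min 1 (ee/3) > 0" using ee by simp
    then have ev2: "eventually (\<lambda>m. norm (a m /\<^sub>R norm (a m) - u) < min 1 (ee/3)) sequentially"
      using ad[unfolded tendsto_iff dist_norm] by blast
    obtain N where N: "inverse (real (Suc N)) < ee/3" using reals_Archimedean[OF \<open>ee/3 > 0\<close>] by blast
    have ev3: "eventually (\<lambda>m. 1 / real (Suc m) < ee/3) sequentially"
      unfolding eventually_sequentially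
    proof (intro exI[of _ N] allI impI)
      fix m assume "N \<le> m"
      then have "1 / real (Suc m) \<le> 1 / real (Suc N)" by (intro divide_left_mono) auto
      then show "1 / real (Suc m) < ee/3" using N by (simp add: inverse_eq_divide)
    qed
    show ?thesis using ev1 ev2 ev3
    proof eventually_elim
      case (elim m)
      have am: "a m \<noteq> 0"
      proof
        assume "a m = 0"
        then show False using elim(2) nu by simp
      qed
      have na: "norm (a m) > 0" using am by simp
      have ncm: "norm (c m) = norm (a m)" using nu by (simp add: c_def)
      have cLD: "c m \<in> LD X" using u unfolding LD_def c_def by force
      obtain x where x: "x \<in> X" "norm (x - c m) \<le> ee/3 * norm (c m)"
        using d(2) cLD ncm na elim(1) by auto
      have inf: "infdist (c m) X \<le> ee/3 * norm (a m)"
      proof (rule infdist_le2[OF x(1)])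
        show "dist (c m) x \<le> ee/3 * norm (a m)" using x(2) ncm by (simp add: dist_norm norm_minus_commute)
      qed
      have "a m - c m = norm (a m) *\<^sub>R (a m /\<^sub>R norm (a m) - u)" using na by (simp add: c_def algebra_simps)
      then have "norm (a m - c m) = norm (a m) * norm (a m /\<^sub>R norm (a m) - u)" by simp
      also have "\<dots> \<le> norm (a m) * (ee/3)" using elim(2) by (intro mult_left_mono) auto
      finally have ac: "norm (a m - c m) \<le> ee/3 * norm (a m)" by (simp add: mult.commute)
      have "eta m = norm (a m) * (1 / real (Suc m))" using am by (simp add: eta_def)
      also have "\<dots> \<le> norm (a m) * (ee/3)" using elim(3) by (intro mult_left_mono) auto
      finally have et: "eta m \<le> ee/3 * norm (a m)" by (simp add: mult.commute)
      have "a m - b m = (a m - c m) + (c m - b m)" by simp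
      then have "norm (a m - b m) \<le> norm (a m - c m) + norm (c m - b m)" by (metis norm_triangle_ineq)
      moreover have "norm (c m - b m) < infdist (c m) X + eta m" using b[of m] by (simp add: dist_norm)
      ultimately have "norm (a m - b m) \<le> ee * norm (a m)" using ac inf et by linarith
      then show ?case using am by blast
    qed
  qed
  show "\<exists>b. (\<forall>m. b m \<in> X) \<and> (\<lambda>m. norm (a m - b m) / norm (a m)) \<longlonglongrightarrow> 0 \<and>
           (\<lambda>m. norm (a m - b m) / norm (b m)) \<longlonglongrightarrow> 0"
  proof (intro exI[of _ b] conjI)
    show "\<forall>m. b m \<in> X" using b by blast
    show "(\<lambda>m. norm (a m - b m) / norm (a m)) \<longlonglongrightarrow> 0"
    proof (rule tendsto0I)
      fix ee :: real assume ee: "ee > 0"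
      from key[OF ee] show "eventually (\<lambda>m. 0 \<le> norm (a m - b m) / norm (a m) \<and> norm (a m - b m) / norm (a m) \<le> ee) sequentially"
      proof (rule eventually_mono)
        fix m assume m: "a m \<noteq> 0 \<and> norm (a m - b m) \<le> ee * norm (a m)"
        then have "norm (a m) > 0" by simp
        then show "0 \<le> norm (a m - b m) / norm (a m) \<and> norm (a m - b m) / norm (a m) \<le> ee"
          using m by (simp add: divide_le_eq)
      qed
    qed
    show "(\<lambda>m. norm (a m - b m) / norm (b m)) \<longlonglongrightarrow> 0"
    proof (rule tendsto0I)
      fix ee :: real assume ee: "ee > 0"
      then have "min (1/2) (ee/2) > 0" by simp
      from key[OF this] show "eventually (\<lambda>m. 0 \<le> norm (a m - b m) / norm (b m) \<and> norm (a m - b m) / norm (b m) \<le> ee) sequentially"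
      proof (rule eventually_mono)
        fix m assume m: "a m \<noteq> 0 \<and> norm (a m - b m) \<le> min (1/2) (ee/2) * norm (a m)"
        have m1: "min (1/2) (ee/2) * norm (a m) \<le> 1/2 * norm (a m)" by (rule mult_right_mono) auto
        have m2: "min (1/2) (ee/2) * norm (a m) \<le> ee/2 * norm (a m)" by (rule mult_right_mono) auto
        have t: "norm (a m) - norm (b m) \<le> norm (a m - b m)" by (rule norm_triangle_ineq2)
        have nb: "norm (b m) \<ge> norm (a m) / 2" using m m1 t by linarith
        have na: "norm (a m) > 0" using m by simp
        have "norm (a m - b m) \<le> ee/2 * norm (a m)" using m m2 by linarith
        also have "\<dots> \<le> ee * norm (b m)" using nb ee by simp
        finally have "norm (a m - b m) \<le> ee * norm (b m)" .
        moreover have "norm (b m) > 0" using nb na by linarith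
        ultimately show "0 \<le> norm (a m - b m) / norm (b m) \<and> norm (a m - b m) / norm (b m) \<le> ee"
          by (simp add: divide_le_eq)
      qed
    qed
  qed
qed

lemma SSP_iff_apx:
  fixes X :: "'a::euclidean_space set"
  shows "SSP X \<longleftrightarrow> apx (LD X) X"
  using SSP_imp_apx apx_imp_SSP by blast

theorem proposition2p14:
  fixes h g :: "'a::euclidean_space \<Rightarrow> 'a" and U V :: "'a set" and A :: "'a set"
    and K1 K2 :: real
  assumes "open U" and "open V" and "0 \<in> U" and "h 0 = 0"
    and "homeomorphism U V h g"
    and "0 < K1" and "K1 \<le> K2"
    and "\<forall>x\<in>U. \<forall>y\<in>U. K1 * norm (x - y) \<le> norm (h x - h y) \<and>
                        norm (h x - h y) \<le> K2 * norm (x - y)"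
    and "0 \<in> closure A"
  shows "(LD (h ` (A \<inter> U)) = LD (h ` (LD A \<inter> U)) \<and> SSP (h ` (LD A \<inter> U)))
     \<longleftrightarrow> (LD (g ` (LD (h ` (A \<inter> U)) \<inter> V)) = LD A \<and> SSP (g ` (LD (h ` (A \<inter> U)) \<inter> V)))"
proof -
  let ?C = "LD A" and ?E = "LD (h ` (A \<inter> U))"
  let ?X = "h ` (?C \<inter> U)" and ?Y = "g ` (?E \<inter> V)"
  have hg1: "\<forall>x\<in>U. g (h x) = x" and hU: "h ` U = V" and hg2: "\<forall>y\<in>V. h (g y) = y" and gV: "g ` V = U"
    using assms(5) unfolding homeomorphism_def by auto
  have V0: "0 \<in> V" using hU assms(3,4) by force
  have g0: "g 0 = 0" using hg1 assms(3,4) by force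
  have gX: "g ` ?X = ?C \<inter> U" using hg1 by (force simp: image_iff)
  have hY: "h ` ?Y = ?E \<inter> V" using hg2 by (force simp: image_iff)
  have XV: "?X \<subseteq> V" using hU by auto
  have YU: "?Y \<subseteq> U" using gV by auto
  have K2: "0 < 1/K2" "1/K2 \<le> 1/K1" using assms(6,7) by (auto simp: frac_le)
  have Lg: "\<forall>x\<in>V. \<forall>y\<in>V. (1/K2) * norm (x - y) \<le> norm (g x - g y) \<and> norm (g x - g y) \<le> (1/K1) * norm (x - y)"
  proof (intro ballI conjI)
    fix x y assume xy: "x \<in> V" "y \<in> V"
    then have "g x \<in> U" "g y \<in> U" using gV by auto
    then have L: "K1 * norm (g x - g y) \<le> norm (x - y)" "norm (x - y) \<le> K2 * norm (g x - g y)"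
      using assms(8) hg2 xy by metis+
    show "(1/K2) * norm (x - y) \<le> norm (g x - g y)" using L(2) assms(6,7)
      by (simp add: divide_le_eq mult.commute)
    show "norm (g x - g y) \<le> (1/K1) * norm (x - y)" using L(1) assms(6)
      by (simp add: le_divide_eq mult.commute)
  qed
  have imgh: "apx (h ` P) (h ` Q)" if "apx P Q" "P \<subseteq> U" "Q \<subseteq> U" for P Q
    by (rule apx_image[OF that assms(3,4,6,7,8)])
  have imgg: "apx (g ` P) (g ` Q)" if "apx P Q" "P \<subseteq> V" "Q \<subseteq> V" for P Q
    by (rule apx_image[OF that V0 g0 K2 Lg])
  have LDC: "LD ?C = ?C" by (rule LD_LD)
  have LDE: "LD ?E = ?E" by (rule LD_LD)
  show ?thesis
  proof
    assume H: "?E = LD ?X \<and> SSP ?X"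
    then have a1: "apx ?E ?X" using SSP_iff_apx by metis
    have "apx (?E \<inter> V) ?X" using apx_mono[OF a1] by blast
    then have "apx ?Y (?C \<inter> U)" using imgg[of "?E \<inter> V" ?X] XV gX by auto
    then have b1: "apx ?Y ?C" using apx_mono by blast
    have "apx ?X ?E" using apx_LD[of ?X] H by simp
    then have "apx ?X (?E \<inter> V)" using apx_restrict_right assms(2) V0 by blast
    then have "apx (?C \<inter> U) ?Y" using imgg[of ?X "?E \<inter> V"] XV gX by auto
    then have b2: "apx ?C ?Y" using apx_restrict_left assms(1,3) by blast
    have "dirs ?Y = dirs ?C" using apx_dirs[OF b1] apx_dirs[OF b2] by blast
    then have "LD ?Y = LD ?C" by (simp add: LD_def)
    then have e: "LD ?Y = ?C" using LDC by simp
    moreover have "SSP ?Y" using SSP_iff_apx e b2 by metis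
    ultimately show "LD ?Y = ?C \<and> SSP ?Y" by blast
  next
    assume H: "LD ?Y = ?C \<and> SSP ?Y"
    then have a1: "apx ?C ?Y" using SSP_iff_apx by metis
    have "apx (?C \<inter> U) ?Y" using apx_mono[OF a1] by blast
    then have "apx ?X (?E \<inter> V)" using imgh[of "?C \<inter> U" ?Y] YU hY by auto
    then have b1: "apx ?X ?E" using apx_mono by blast
    have "apx ?Y ?C" using apx_LD[of ?Y] H by simp
    then have "apx ?Y (?C \<inter> U)" using apx_restrict_right assms(1,3) by blast
    then have "apx (?E \<inter> V) ?X" using imgh[of ?Y "?C \<inter> U"] YU hY by auto
    then have b2: "apx ?E ?X" using apx_restrict_left assms(2) V0 by blast
    have "dirs ?X = dirs ?E" using apx_dirs[OF b1] apx_dirs[OF b2] by blast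
    then have "LD ?X = LD ?E" by (simp add: LD_def)
    then have e: "?E = LD ?X" using LDE by simp
    moreover have "SSP ?X" using SSP_iff_apx e b2 by metis
    ultimately show "?E = LD ?X \<and> SSP ?X" by blast
  qed
qed

end
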